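(* Let $L\in\mathcal L_n$. For $k\in[n]$ let $P_k$ be the $n\times n$ permutation matrix with $(P_k)_{i,j}=1$ iff $L_{i,j}=k$. Then $$\sum_{k=1}^n r(P_k)=\frac{n^2(n^2-1)}{12}.$$ The same identity holds when $P_1,\dots,P_n$ are instead the permutation matrices determined by the rows of $L$ (for row $i$, $(P_i)_{j,k}=1$ iff $L_{i,j}=k$) or by the columns of $L$ (for column $j$, $(P_j)_{i,k}=1$ iff $L_{i,j}=k$).
   Context: Let $[n]=\{1,\dots,n\}$. A Latin square of order $n$ is an $n\times n$ array with entries in $[n]$ in which each symbol occurs exactly once in each row and each column; $\mathcal L_n$ is the set of them. For an $n\times n$ matrix $P$, its corner-sum matrix is $\Sigma(P)_{i,j}=\sum_{a\le i,b\le j}P_{a,b}$ for $i,j\in\{0,\dots,n\}$. For a permutation matrix (or alternating sign matrix) $P$ of order $n$, $r(P)$ denotes its rank in the lattice of $n\times n$ alternating sign matrices under the Bruhat order (whose minimum is the identity $I_n$), namely $r(P)=\sum_{0\le i,j\le n}\big(\min(i,j)-\Sigma(P)_{i,j}\big)$. *)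

theory Defs
  imports Complex_Main
begin

text \<open>Matrices of order n are functions nat => nat => _ indexed by 1..n (rows, columns).\<close>

definition latin_square :: "nat \<Rightarrow> (nat \<Rightarrow> nat \<Rightarrow> nat) \<Rightarrow> bool" where
  "latin_square n L \<longleftrightarrow>
     (\<forall>i\<in>{1..n}. \<forall>j\<in>{1..n}. L i j \<in> {1..n}) \<and>
     (\<forall>i\<in>{1..n}. \<forall>k\<in>{1..n}. \<exists>!j. j \<in> {1..n} \<and> L i j = k) \<and>
     (\<forall>j\<in>{1..n}. \<forall>k\<in>{1..n}. \<exists>!i. i \<in> {1..n} \<and> L i j = k)"

definition corner_sum :: "(nat \<Rightarrow> nat \<Rightarrow> int) \<Rightarrow> nat \<Rightarrow> nat \<Rightarrow> int" where
  "corner_sum P i j = (\<Sum>a\<in>{1..i}. \<Sum>b\<in>{1..j}. P a b)"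

definition asm_rank :: "nat \<Rightarrow> (nat \<Rightarrow> nat \<Rightarrow> int) \<Rightarrow> int" where
  "asm_rank n P = (\<Sum>i\<in>{0..n}. \<Sum>j\<in>{0..n}. int (min i j) - corner_sum P i j)"

definition symbol_matrix :: "(nat \<Rightarrow> nat \<Rightarrow> nat) \<Rightarrow> nat \<Rightarrow> nat \<Rightarrow> nat \<Rightarrow> int" where
  "symbol_matrix L k i j = (if L i j = k then 1 else 0)"

definition row_matrix :: "(nat \<Rightarrow> nat \<Rightarrow> nat) \<Rightarrow> nat \<Rightarrow> nat \<Rightarrow> nat \<Rightarrow> int" where
  "row_matrix L i j k = (if L i j = k then 1 else 0)"

definition col_matrix :: "(nat \<Rightarrow> nat \<Rightarrow> nat) \<Rightarrow> nat \<Rightarrow> nat \<Rightarrow> nat \<Rightarrow> int" where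
  "col_matrix L j i k = (if L i j = k then 1 else 0)"

end

theory Submission
  imports Defs
begin

lemma key:
  fixes P :: "nat \<Rightarrow> nat \<Rightarrow> nat \<Rightarrow> int"
  assumes h: "\<forall>a\<in>{1..n}. \<forall>b\<in>{1..n}. (\<Sum>k\<in>{1..n}. P k a b) = 1"
  shows "(\<Sum>k\<in>{1..n}. asm_rank n (P k)) =
     int n * (\<Sum>i\<in>{0..n}. \<Sum>j\<in>{0..n}. int (min i j)) - (\<Sum>i\<in>{0..n}. \<Sum>j\<in>{0..n}. int i * int j)"
proof -
  have cs: "(\<Sum>k\<in>{1..n}. corner_sum (P k) i j) = int i * int j" if "i \<le> n" "j \<le> n" for i j
  proof -
    have "(\<Sum>k\<in>{1..n}. corner_sum (P k) i j) = (\<Sum>a\<in>{1..i}. \<Sum>b\<in>{1..j}. \<Sum>k\<in>{1..n}. P k a b)"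
      unfolding corner_sum_def
    proof -
      have "(\<Sum>k\<in>{1..n}. \<Sum>a\<in>{1..i}. \<Sum>b\<in>{1..j}. P k a b) = (\<Sum>a\<in>{1..i}. \<Sum>k\<in>{1..n}. \<Sum>b\<in>{1..j}. P k a b)"
        by (rule sum.swap)
      also have "\<dots> = (\<Sum>a\<in>{1..i}. \<Sum>b\<in>{1..j}. \<Sum>k\<in>{1..n}. P k a b)"
        by (rule sum.cong[OF refl], rule sum.swap)
      finally show "(\<Sum>k\<in>{1..n}. \<Sum>a\<in>{1..i}. \<Sum>b\<in>{1..j}. P k a b) = (\<Sum>a\<in>{1..i}. \<Sum>b\<in>{1..j}. \<Sum>k\<in>{1..n}. P k a b)" .
    qed
    also have "\<dots> = (\<Sum>a\<in>{1..i}. \<Sum>b\<in>{1..j}. (1::int))"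
      using h that by (intro sum.cong refl) auto
    finally show ?thesis by simp
  qed
  have "(\<Sum>k\<in>{1..n}. asm_rank n (P k)) =
     (\<Sum>i\<in>{0..n}. \<Sum>j\<in>{0..n}. \<Sum>k\<in>{1..n}. int (min i j) - corner_sum (P k) i j)"
    unfolding asm_rank_def
  proof -
    let ?f = "\<lambda>k i j. int (min i j) - corner_sum (P k) i j"
    have "(\<Sum>k\<in>{1..n}. \<Sum>i\<in>{0..n}. \<Sum>j\<in>{0..n}. ?f k i j) = (\<Sum>i\<in>{0..n}. \<Sum>k\<in>{1..n}. \<Sum>j\<in>{0..n}. ?f k i j)"
      by (rule sum.swap)
    also have "\<dots> = (\<Sum>i\<in>{0..n}. \<Sum>j\<in>{0..n}. \<Sum>k\<in>{1..n}. ?f k i j)"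
      by (rule sum.cong[OF refl], rule sum.swap)
    finally show "(\<Sum>k\<in>{1..n}. \<Sum>i\<in>{0..n}. \<Sum>j\<in>{0..n}. ?f k i j) = (\<Sum>i\<in>{0..n}. \<Sum>j\<in>{0..n}. \<Sum>k\<in>{1..n}. ?f k i j)" .
  qed
  also have "\<dots> = (\<Sum>i\<in>{0..n}. \<Sum>j\<in>{0..n}. int n * int (min i j) - int i * int j)"
    apply (intro sum.cong refl)
    apply (subst sum_subtractf)
    apply (subst cs)
    apply auto
    done
  finally show ?thesis
    by (simp add: sum_subtractf sum_distrib_left)
qed

lemma gauss: "2 * (\<Sum>i\<in>{0..n}. int i) = int n * (int n + 1)"
  by (induction n) (auto simp: algebra_simps)

lemma minsum: "6 * (\<Sum>i\<in>{0..n}. \<Sum>j\<in>{0..n}. int (min i j)) = int n * (int n + 1) * (2 * int n + 1)"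
proof (induction n)
  case 0 then show ?case by simp
next
  case (Suc n)
  have a: "(\<Sum>i\<in>{0..n}. int (min i (Suc n))) = (\<Sum>i\<in>{0..n}. int i)"
    by (intro sum.cong refl) auto
  have b: "(\<Sum>j\<in>{0..n}. int (min (Suc n) j)) = (\<Sum>i\<in>{0..n}. int i)"
    by (intro sum.cong refl) auto
  have "(\<Sum>i\<in>{0..Suc n}. \<Sum>j\<in>{0..Suc n}. int (min i j)) =
     (\<Sum>i\<in>{0..n}. \<Sum>j\<in>{0..n}. int (min i j)) + (\<Sum>i\<in>{0..n}. int (min i (Suc n)))
     + (\<Sum>j\<in>{0..n}. int (min (Suc n) j)) + int (Suc n)"
    by (simp add: sum.atLeast0_atMost_Suc sum.distrib)
  also have "\<dots> = (\<Sum>i\<in>{0..n}. \<Sum>j\<in>{0..n}. int (min i j)) + 2 * (\<Sum>i\<in>{0..n}. int i) + int (Suc n)"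
    using a b by simp
  finally have "6 * (\<Sum>i\<in>{0..Suc n}. \<Sum>j\<in>{0..Suc n}. int (min i j)) =
     int n * (int n + 1) * (2 * int n + 1) + 6 * (int n * (int n + 1)) + 6 * int (Suc n)"
    using Suc gauss[of n] by simp
  then show ?case by (simp add: algebra_simps)
qed

lemma closed:
  "12 * (int n * (\<Sum>i\<in>{0..n}. \<Sum>j\<in>{0..n}. int (min i j)) - (\<Sum>i\<in>{0..n}. \<Sum>j\<in>{0..n}. int i * int j))
   = int (n^2 * (n^2 - 1))"
proof -
  define S where "S = (\<Sum>i\<in>{0..n}. int i)"
  define M where "M = (\<Sum>i\<in>{0..n}. \<Sum>j\<in>{0..n}. int (min i j))"
  define m where "m = int n"
  have p: "(\<Sum>i\<in>{0..n}. \<Sum>j\<in>{0..n}. int i * int j) = S * S"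
    unfolding S_def by (simp add: sum_product)
  have e: "int (n^2 * (n^2 - 1)) = m * m * (m * m - 1)"
  proof (cases "n = 0")
    case False
    then have "int (n^2 - 1) = m * m - 1" unfolding m_def
      by (simp add: of_nat_diff power2_eq_square)
    then show ?thesis unfolding m_def by (simp add: power2_eq_square)
  qed (simp add: m_def)
  have g: "2 * S = m * (m + 1)" unfolding S_def m_def by (rule gauss)
  have mm: "6 * M = m * (m + 1) * (2 * m + 1)" unfolding M_def m_def by (rule minsum)
  have r: "12 * (m * M - S * S) = 2 * m * (6 * M) - 3 * ((2 * S) * (2 * S))"
    by (simp add: algebra_simps)
  have "12 * (m * M - S * S) = m * m * (m * m - 1)"
    unfolding r g mm by (simp add: algebra_simps)
  then show ?thesis using p e unfolding M_def m_def by simp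
qed

lemma final:
  fixes P :: "nat \<Rightarrow> nat \<Rightarrow> nat \<Rightarrow> int"
  assumes h: "\<forall>a\<in>{1..n}. \<forall>b\<in>{1..n}. (\<Sum>k\<in>{1..n}. P k a b) = 1"
  shows "real_of_int (\<Sum>k\<in>{1..n}. asm_rank n (P k)) = real (n^2 * (n^2 - 1)) / 12"
proof -
  have "12 * (\<Sum>k\<in>{1..n}. asm_rank n (P k)) = int (n^2 * (n^2 - 1))"
    using key[OF h] closed[of n] by simp
  then have "12 * real_of_int (\<Sum>k\<in>{1..n}. asm_rank n (P k)) = real (n^2 * (n^2 - 1))"
    by (metis of_int_mult of_int_numeral of_int_of_nat_eq)
  then show ?thesis by simp
qed


theorem mainTheorem13:
  fixes n :: nat and L :: "nat \<Rightarrow> nat \<Rightarrow> nat"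
  assumes "latin_square n L"
  shows "real_of_int (\<Sum>k\<in>{1..n}. asm_rank n (symbol_matrix L k))
           = real (n^2 * (n^2 - 1)) / 12
       \<and> real_of_int (\<Sum>i\<in>{1..n}. asm_rank n (row_matrix L i))
           = real (n^2 * (n^2 - 1)) / 12
       \<and> real_of_int (\<Sum>j\<in>{1..n}. asm_rank n (col_matrix L j))
           = real (n^2 * (n^2 - 1)) / 12"
proof (intro conjI)
  note ls = assms[unfolded latin_square_def]
  show "real_of_int (\<Sum>k\<in>{1..n}. asm_rank n (symbol_matrix L k)) = real (n^2 * (n^2 - 1)) / 12"
    by (rule final) (use ls in \<open>simp add: symbol_matrix_def\<close>)
  show "real_of_int (\<Sum>i\<in>{1..n}. asm_rank n (row_matrix L i)) = real (n^2 * (n^2 - 1)) / 12"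
  proof (rule final, intro ballI)
    fix a b assume a: "a \<in> {1..n}" and b: "b \<in> {1..n}"
    obtain i where i: "i \<in> {1..n}" "L i a = b" "\<forall>i'. i' \<in> {1..n} \<and> L i' a = b \<longrightarrow> i' = i"
      using ls a b by metis
    have "(\<Sum>k\<in>{1..n}. row_matrix L k a b) = (\<Sum>k\<in>{1..n}. if i = k then 1 else 0)"
      using i by (intro sum.cong refl) (auto simp: row_matrix_def)
    then show "(\<Sum>k\<in>{1..n}. row_matrix L k a b) = 1" using i by simp
  qed
  show "real_of_int (\<Sum>j\<in>{1..n}. asm_rank n (col_matrix L j)) = real (n^2 * (n^2 - 1)) / 12"
  proof (rule final, intro ballI)
    fix a b assume a: "a \<in> {1..n}" and b: "b \<in> {1..n}"
    obtain j where j: "j \<in> {1..n}" "L a j = b" "\<forall>j'. j' \<in> {1..n} \<and> L a j' = b \<longrightarrow> j' = j"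
      using ls a b by metis
    have "(\<Sum>k\<in>{1..n}. col_matrix L k a b) = (\<Sum>k\<in>{1..n}. if j = k then 1 else 0)"
      using j by (intro sum.cong refl) (auto simp: col_matrix_def)
    then show "(\<Sum>k\<in>{1..n}. col_matrix L k a b) = 1" using j by simp
  qed
qed

end
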